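(* Let $\mathbb{F}$ be a field with $\operatorname{char}(\mathbb{F})\neq 2$ and let $G$ be a non-abelian group with a group involution $\ast$ and a non-identity orientation $\sigma:G\to\{\pm1\}$ such that $gg^\ast\in\ker\sigma$ for all $g\in G$. Then $\mathbb{F}G$ is normal with respect to the oriented involution $\circledast$ if and only if $\mathbb{F}G^+$ is commutative.
   Context: A group involution on $G$ is a map $\ast:G\to G$ with $(gh)^\ast=h^\ast g^\ast$ and $(g^\ast)^\ast=g$. An orientation is a group homomorphism $\sigma:G\to\{\pm1\}$. The oriented involution is $(\sum_g\alpha_g g)^\circledast=\sum_g\alpha_g\sigma(g)g^\ast$ on $\mathbb{F}G$. $\mathbb{F}G$ is normal if $\alpha\alpha^\circledast=\alpha^\circledast\alpha$ for all $\alpha\in\mathbb{F}G$. $\mathbb{F}G^+=\{\alpha\in\mathbb{F}G:\alpha^\circledast=\alpha\}$ is the set of symmetric elements under $\circledast$. *)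

theory Defs
  imports "HOL-Algebra.Group"
begin

text \<open>Group algebra FG over a field 'f (type class) of a group G (HOL-Algebra locale),
 elements are finitely supported coefficient functions on carrier G (zero outside).\<close>

definition grp_alg :: "('g, 'b) monoid_scheme \<Rightarrow> ('g \<Rightarrow> 'f::field) set" where
  "grp_alg G = {a. (\<forall>g. g \<notin> carrier G \<longrightarrow> a g = 0) \<and> finite {g. a g \<noteq> 0}}"

definition grp_alg_mult :: "('g, 'b) monoid_scheme \<Rightarrow> ('g \<Rightarrow> 'f::field) \<Rightarrow> ('g \<Rightarrow> 'f) \<Rightarrow> ('g \<Rightarrow> 'f)" where
  "grp_alg_mult G a b = (\<lambda>x. if x \<in> carrier G then
      (\<Sum>g\<in>{g \<in> carrier G. a g \<noteq> 0}. a g * b (inv\<^bsub>G\<^esub> g \<otimes>\<^bsub>G\<^esub> x)) else 0)"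

definition group_involution :: "('g, 'b) monoid_scheme \<Rightarrow> ('g \<Rightarrow> 'g) \<Rightarrow> bool" where
  "group_involution G s \<longleftrightarrow> (\<forall>g\<in>carrier G. s g \<in> carrier G) \<and>
     (\<forall>g\<in>carrier G. \<forall>h\<in>carrier G. s (g \<otimes>\<^bsub>G\<^esub> h) = s h \<otimes>\<^bsub>G\<^esub> s g) \<and>
     (\<forall>g\<in>carrier G. s (s g) = g)"

definition orientation :: "('g, 'b) monoid_scheme \<Rightarrow> ('g \<Rightarrow> int) \<Rightarrow> bool" where
  "orientation G \<sigma> \<longleftrightarrow> (\<forall>g\<in>carrier G. \<sigma> g \<in> {1, -1}) \<and>
     (\<forall>g\<in>carrier G. \<forall>h\<in>carrier G. \<sigma> (g \<otimes>\<^bsub>G\<^esub> h) = \<sigma> g * \<sigma> h)"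

text \<open>Oriented involution: (\<Sum> a_g g)^\<circledast> = \<Sum> a_g \<sigma>(g) g^*; its coefficient at x is
  a(x^*) \<sigma>(x^*) since * is a bijection of G.\<close>
definition oriented_inv :: "('g, 'b) monoid_scheme \<Rightarrow> ('g \<Rightarrow> 'g) \<Rightarrow> ('g \<Rightarrow> int) \<Rightarrow> ('g \<Rightarrow> 'f::field) \<Rightarrow> ('g \<Rightarrow> 'f)" where
  "oriented_inv G s \<sigma> a = (\<lambda>x. if x \<in> carrier G then of_int (\<sigma> (s x)) * a (s x) else 0)"

definition grp_alg_normal :: "('g, 'b) monoid_scheme \<Rightarrow> ('g \<Rightarrow> 'g) \<Rightarrow> ('g \<Rightarrow> int) \<Rightarrow> ('f::field) itself \<Rightarrow> bool" where
  "grp_alg_normal G s \<sigma> _ \<longleftrightarrow> (\<forall>a \<in> (grp_alg G :: ('g \<Rightarrow> 'f) set).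
      grp_alg_mult G a (oriented_inv G s \<sigma> a) = grp_alg_mult G (oriented_inv G s \<sigma> a) a)"

definition sym_elems :: "('g, 'b) monoid_scheme \<Rightarrow> ('g \<Rightarrow> 'g) \<Rightarrow> ('g \<Rightarrow> int) \<Rightarrow> ('g \<Rightarrow> 'f::field) set" where
  "sym_elems G s \<sigma> = {a \<in> grp_alg G. oriented_inv G s \<sigma> a = a}"

definition sym_commutative :: "('g, 'b) monoid_scheme \<Rightarrow> ('g \<Rightarrow> 'g) \<Rightarrow> ('g \<Rightarrow> int) \<Rightarrow> ('f::field) itself \<Rightarrow> bool" where
  "sym_commutative G s \<sigma> _ \<longleftrightarrow> (\<forall>a \<in> (sym_elems G s \<sigma> :: ('g \<Rightarrow> 'f) set). \<forall>b \<in> sym_elems G s \<sigma>.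
      grp_alg_mult G a b = grp_alg_mult G b a)"

end

theory Submission
  imports Defs
begin

context group begin
lemma lcan: "a \<in> carrier G \<Longrightarrow> b \<in> carrier G \<Longrightarrow> c \<in> carrier G \<Longrightarrow> a \<otimes> b = a \<otimes> c \<longleftrightarrow> b = c"
  by simp
lemma rcan: "a \<in> carrier G \<Longrightarrow> b \<in> carrier G \<Longrightarrow> c \<in> carrier G \<Longrightarrow> b \<otimes> a = c \<otimes> a \<longleftrightarrow> b = c"
  by simp
lemma rc22[simp]: "a \<in> carrier G \<Longrightarrow> b \<in> carrier G \<Longrightarrow> c \<in> carrier G \<Longrightarrow> d \<in> carrier G \<Longrightarrow> u \<in> carrier G \<Longrightarrow>
  a \<otimes> (b \<otimes> u) = c \<otimes> (d \<otimes> u) \<longleftrightarrow> a \<otimes> b = c \<otimes> d"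
  by (simp add: m_assoc[symmetric])
lemma rc21[simp]: "a \<in> carrier G \<Longrightarrow> b \<in> carrier G \<Longrightarrow> c \<in> carrier G \<Longrightarrow> u \<in> carrier G \<Longrightarrow>
  a \<otimes> (b \<otimes> u) = c \<otimes> u \<longleftrightarrow> a \<otimes> b = c"
  by (simp add: m_assoc[symmetric])
lemma rc12[simp]: "a \<in> carrier G \<Longrightarrow> c \<in> carrier G \<Longrightarrow> d \<in> carrier G \<Longrightarrow> u \<in> carrier G \<Longrightarrow>
  a \<otimes> u = c \<otimes> (d \<otimes> u) \<longleftrightarrow> a = c \<otimes> d"
  by (simp add: m_assoc[symmetric])
lemma rc32[simp]: "a \<in> carrier G \<Longrightarrow> b \<in> carrier G \<Longrightarrow> c \<in> carrier G \<Longrightarrow> d \<in> carrier G \<Longrightarrow> e \<in> carrier G \<Longrightarrow> u \<in> carrier G \<Longrightarrow>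
  a \<otimes> (b \<otimes> (e \<otimes> u)) = c \<otimes> (d \<otimes> u) \<longleftrightarrow> a \<otimes> (b \<otimes> e) = c \<otimes> d"
  by (simp add: m_assoc[symmetric])
lemma rc23[simp]: "a \<in> carrier G \<Longrightarrow> b \<in> carrier G \<Longrightarrow> c \<in> carrier G \<Longrightarrow> d \<in> carrier G \<Longrightarrow> e \<in> carrier G \<Longrightarrow> u \<in> carrier G \<Longrightarrow>
  c \<otimes> (d \<otimes> u) = a \<otimes> (b \<otimes> (e \<otimes> u)) \<longleftrightarrow> c \<otimes> d = a \<otimes> (b \<otimes> e)"
  by (simp add: m_assoc[symmetric])
lemma rc33[simp]: "a \<in> carrier G \<Longrightarrow> b \<in> carrier G \<Longrightarrow> c \<in> carrier G \<Longrightarrow> d \<in> carrier G \<Longrightarrow> e \<in> carrier G \<Longrightarrow> f \<in> carrier G \<Longrightarrow> u \<in> carrier G \<Longrightarrow>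
  a \<otimes> (b \<otimes> (e \<otimes> u)) = c \<otimes> (d \<otimes> (f \<otimes> u)) \<longleftrightarrow> a \<otimes> (b \<otimes> e) = c \<otimes> (d \<otimes> f)"
  by (simp add: m_assoc[symmetric])
lemma rc31[simp]: "a \<in> carrier G \<Longrightarrow> b \<in> carrier G \<Longrightarrow> c \<in> carrier G \<Longrightarrow> e \<in> carrier G \<Longrightarrow> u \<in> carrier G \<Longrightarrow>
  a \<otimes> (b \<otimes> (e \<otimes> u)) = c \<otimes> u \<longleftrightarrow> a \<otimes> (b \<otimes> e) = c"
  by (simp add: m_assoc[symmetric])
lemma rc13[simp]: "a \<in> carrier G \<Longrightarrow> b \<in> carrier G \<Longrightarrow> c \<in> carrier G \<Longrightarrow> e \<in> carrier G \<Longrightarrow> u \<in> carrier G \<Longrightarrow>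
  c \<otimes> u = a \<otimes> (b \<otimes> (e \<otimes> u)) \<longleftrightarrow> c = a \<otimes> (b \<otimes> e)"
  by (simp add: m_assoc[symmetric])
end

locale invgrp = group G for G (structure) +
  fixes s :: "'a \<Rightarrow> 'a" and \<sigma> :: "'a \<Rightarrow> int"
  assumes sinv: "group_involution G s"
    and sori: "orientation G \<sigma>"
    and sker: "\<forall>g\<in>carrier G. \<sigma> (g \<otimes> s g) = 1"
begin

lemma s_closed[simp]: "g \<in> carrier G \<Longrightarrow> s g \<in> carrier G"
  using sinv unfolding group_involution_def by blast
lemma s_mult: "g \<in> carrier G \<Longrightarrow> h \<in> carrier G \<Longrightarrow> s (g \<otimes> h) = s h \<otimes> s g"
  using sinv unfolding group_involution_def by blast
lemma s_s[simp]: "g \<in> carrier G \<Longrightarrow> s (s g) = g"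
  using sinv unfolding group_involution_def by blast
lemma s_eq_iff[simp]: "g \<in> carrier G \<Longrightarrow> h \<in> carrier G \<Longrightarrow> s g = s h \<longleftrightarrow> g = h"
  by (metis s_s)
lemma sig_mult: "g \<in> carrier G \<Longrightarrow> h \<in> carrier G \<Longrightarrow> \<sigma> (g \<otimes> h) = \<sigma> g * \<sigma> h"
  using sori unfolding orientation_def by blast
lemma sig_vals: "g \<in> carrier G \<Longrightarrow> \<sigma> g = 1 \<or> \<sigma> g = -1"
  using sori unfolding orientation_def by blast
lemma sig_s[simp]: "g \<in> carrier G \<Longrightarrow> \<sigma> (s g) = \<sigma> g"
proof -
  assume g: "g \<in> carrier G"
  have "\<sigma> g * \<sigma> (s g) = 1" using sker g sig_mult[of g "s g"] by simp
  thus ?thesis using sig_vals[OF g] sig_vals[of "s g"] g by auto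
qed
lemma sig_sq[simp]: "g \<in> carrier G \<Longrightarrow> \<sigma> g * \<sigma> g = 1"
  using sig_vals by fastforce

end

definition ind :: "bool \<Rightarrow> 'f::field" where "ind P = (if P then 1 else 0)"

lemma ind_simps[simp]: "ind True = 1" "ind False = 0" "P \<Longrightarrow> ind P = 1" "\<not> P \<Longrightarrow> ind P = 0"
  by (auto simp: ind_def)

definition lc :: "'f \<Rightarrow> 'g \<Rightarrow> 'f \<Rightarrow> 'g \<Rightarrow> 'g \<Rightarrow> 'f::field" where
  "lc c1 g1 c2 g2 x = c1 * ind (x = g1) + c2 * ind (x = g2)"

context group begin

lemma mult_sum:
  assumes "a \<in> grp_alg G" "finite F" "{g \<in> carrier G. a g \<noteq> 0} \<subseteq> F" "F \<subseteq> carrier G"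
  shows "grp_alg_mult G a b x = (if x \<in> carrier G then (\<Sum>g\<in>F. a g * b (inv g \<otimes> x)) else 0)"
proof -
  have "(\<Sum>g\<in>{g \<in> carrier G. a g \<noteq> 0}. a g * b (inv g \<otimes> x)) = (\<Sum>g\<in>F. a g * b (inv g \<otimes> x))"
    by (rule sum.mono_neutral_left) (use assms in auto)
  thus ?thesis unfolding grp_alg_mult_def by simp
qed

lemma lc_in: "g1 \<in> carrier G \<Longrightarrow> g2 \<in> carrier G \<Longrightarrow> lc c1 g1 c2 g2 \<in> grp_alg G"
proof -
  assume a: "g1 \<in> carrier G" "g2 \<in> carrier G"
  have "{g. lc c1 g1 c2 g2 g \<noteq> 0} \<subseteq> {g1, g2}" by (auto simp: lc_def ind_def split: if_splits)
  hence "finite {g. lc c1 g1 c2 g2 g \<noteq> 0}" by (rule finite_subset) simp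
  thus ?thesis using a unfolding grp_alg_def by (auto simp: lc_def ind_def)
qed

lemma mult_lc:
  assumes "g1 \<in> carrier G" "g2 \<in> carrier G"
  shows "grp_alg_mult G (lc c1 g1 c2 g2) b x =
     (if x \<in> carrier G then c1 * b (inv g1 \<otimes> x) + c2 * b (inv g2 \<otimes> x) else 0)"
proof -
  have m: "grp_alg_mult G (lc c1 g1 c2 g2) b x = (if x \<in> carrier G then
      (\<Sum>g\<in>{g1,g2}. lc c1 g1 c2 g2 g * b (inv g \<otimes> x)) else 0)"
    by (rule mult_sum) (use assms lc_in in \<open>auto simp: lc_def ind_def split: if_splits\<close>)
  show ?thesis
  proof (cases "g1 = g2")
    case True thus ?thesis using m by (simp add: lc_def ind_def algebra_simps)
  next
    case False thus ?thesis using m by (simp add: lc_def ind_def algebra_simps)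
  qed
qed

lemma inv_eq_iff[simp]: "g \<in> carrier G \<Longrightarrow> x \<in> carrier G \<Longrightarrow> h \<in> carrier G \<Longrightarrow>
   (inv g \<otimes> x = h) \<longleftrightarrow> (x = g \<otimes> h)"
  by (rule inv_solve_left')

lemma lc_mult_lc:
  assumes "g1 \<in> carrier G" "g2 \<in> carrier G" "h1 \<in> carrier G" "h2 \<in> carrier G" "x \<in> carrier G"
  shows "grp_alg_mult G (lc c1 g1 c2 g2) (lc d1 h1 d2 h2) x =
     c1 * d1 * ind (x = g1 \<otimes> h1) + c1 * d2 * ind (x = g1 \<otimes> h2) +
     c2 * d1 * ind (x = g2 \<otimes> h1) + c2 * d2 * ind (x = g2 \<otimes> h2)"
  using assms by (simp add: mult_lc lc_def ind_def algebra_simps)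

end

context invgrp begin

lemma oinv_lc:
  assumes "g1 \<in> carrier G" "g2 \<in> carrier G"
  shows "oriented_inv G s \<sigma> (lc c1 g1 c2 g2) = lc (c1 * of_int (\<sigma> g1)) (s g1) (c2 * of_int (\<sigma> g2)) (s g2)"
proof
  fix x
  show "oriented_inv G s \<sigma> (lc c1 g1 c2 g2) x = lc (c1 * of_int (\<sigma> g1)) (s g1) (c2 * of_int (\<sigma> g2)) (s g2) x"
  proof (cases "x \<in> carrier G")
    case True
    have e1: "(s x = g1) = (x = s g1)" using True assms by (metis s_s)
    have e2: "(s x = g2) = (x = s g2)" using True assms by (metis s_s)
    show ?thesis using True assms unfolding oriented_inv_def lc_def e1 e2
      by (auto simp: algebra_simps ind_def)
  next
    case False
    thus ?thesis using assms unfolding oriented_inv_def lc_def by (auto simp: ind_def)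
  qed
qed

end

lemma two_ne: "CHAR('f::field) \<noteq> 2 \<Longrightarrow> (2::'f) \<noteq> 0"
proof
  assume c: "CHAR('f) \<noteq> 2" and t: "(2::'f) = 0"
  have "of_nat 2 = (0::'f)" using t by simp
  hence "CHAR('f) dvd 2" by (simp only: of_nat_eq_0_iff_char_dvd)
  hence "CHAR('f) \<le> 2" "CHAR('f) \<noteq> 0" by (auto dest: dvd_imp_le intro: Nat.gr0I)
  hence "CHAR('f) = 1 \<or> CHAR('f) = 2" by linarith
  thus False using c CHAR_not_1[where 'a='f] by simp
qed

lemma neqI': "(a::'f::field) - b \<noteq> 0 \<Longrightarrow> a \<noteq> b" by auto

lemma numfacts:
  assumes two: "(2::'f::field) \<noteq> 0"
  shows "(4::'f) \<noteq> 0" "(2::'f) \<noteq> 4" "(4::'f) \<noteq> 2" "(1::'f) \<noteq> -1" "(-1::'f) \<noteq> 1" "(2::'f) \<noteq> -2" "(-2::'f) \<noteq> 2" "(0::'f) \<noteq> 2" "(0::'f) \<noteq> 4" "(2::'f) \<noteq> 1" "(1::'f) \<noteq> 2" "(4::'f) \<noteq> -4" "(-4::'f) \<noteq> 4" "(-2::'f) \<noteq> 0" "(-4::'f) \<noteq> 0" "(0::'f) \<noteq> -2" "(0::'f) \<noteq> -4" "(1::'f) + 1 \<noteq> 0" "(-1::'f) - 1 \<noteq> 0"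
proof -
  have f: "(4::'f) = 2 * 2" by simp
  have 4: "(4::'f) \<noteq> 0" using two by (simp only: f mult_eq_0_iff) simp
  have f8: "(8::'f) = 2 * 4" by simp
  have 8: "(8::'f) \<noteq> 0" using two 4 by (simp only: f8 mult_eq_0_iff) simp
  show "(4::'f) \<noteq> 0" by (rule neqI') (use two 4 8 in simp)
  show "(2::'f) \<noteq> 4" by (rule neqI') (use two 4 8 in simp)
  show "(4::'f) \<noteq> 2" by (rule neqI') (use two 4 8 in simp)
  show "(1::'f) \<noteq> -1" by (rule neqI') (use two 4 8 in simp)
  show "(-1::'f) \<noteq> 1" by (rule neqI') (use two 4 8 in simp)
  show "(2::'f) \<noteq> -2" by (rule neqI') (use two 4 8 in simp)
  show "(-2::'f) \<noteq> 2" by (rule neqI') (use two 4 8 in simp)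
  show "(0::'f) \<noteq> 2" by (rule neqI') (use two 4 8 in simp)
  show "(0::'f) \<noteq> 4" by (rule neqI') (use two 4 8 in simp)
  show "(2::'f) \<noteq> 1" by (rule neqI') (use two 4 8 in simp)
  show "(1::'f) \<noteq> 2" by (rule neqI') (use two 4 8 in simp)
  show "(4::'f) \<noteq> -4" by (rule neqI') (use two 4 8 in simp)
  show "(-4::'f) \<noteq> 4" by (rule neqI') (use two 4 8 in simp)
  show "(-2::'f) \<noteq> 0" by (rule neqI') (use two 4 8 in simp)
  show "(-4::'f) \<noteq> 0" by (rule neqI') (use two 4 8 in simp)
  show "(0::'f) \<noteq> -2" by (rule neqI') (use two 4 8 in simp)
  show "(0::'f) \<noteq> -4" by (rule neqI') (use two 4 8 in simp)
  show "(1::'f) + 1 \<noteq> 0" by (rule neqI') (use two 4 8 in simp)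
  show "(-1::'f) - 1 \<noteq> 0" by (rule neqI') (use two 4 8 in simp)
qed

context invgrp begin


definition sg :: "'a \<Rightarrow> 'a \<Rightarrow> 'f::field" where "sg g = lc 1 g (of_int (\<sigma> g)) (s g)"

lemma lc_comm: "lc c1 g1 c2 g2 = lc c2 g2 c1 g1"
  by (rule ext) (simp add: lc_def)

lemma sg_sym: "g \<in> carrier G \<Longrightarrow> (sg g :: 'a \<Rightarrow> 'f::field) \<in> sym_elems G s \<sigma>"
proof -
  assume g: "g \<in> carrier G"
  have "of_int (\<sigma> g) * of_int (\<sigma> g) = (1::'f)"
    using sig_sq[OF g] by (metis of_int_1 of_int_mult)
  hence "oriented_inv G s \<sigma> (sg g :: 'a \<Rightarrow> 'f) = sg g"
    using g unfolding sg_def by (simp add: oinv_lc lc_comm)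
  thus ?thesis using g lc_in[OF g s_closed[OF g]] unfolding sym_elems_def sg_def by auto
qed

lemma C_pt:
  assumes C: "sym_commutative G s \<sigma> TYPE('f::field)"
    and g: "g \<in> carrier G" and h: "h \<in> carrier G" and x: "x \<in> carrier G"
  shows "ind (x = g \<otimes> h) + of_int (\<sigma> h) * ind (x = g \<otimes> s h) + of_int (\<sigma> g) * ind (x = s g \<otimes> h)
     + of_int (\<sigma> g) * of_int (\<sigma> h) * ind (x = s g \<otimes> s h) =
     ind (x = h \<otimes> g) + of_int (\<sigma> g) * ind (x = h \<otimes> s g) + of_int (\<sigma> h) * ind (x = s h \<otimes> g)
     + of_int (\<sigma> g) * of_int (\<sigma> h) * (ind (x = s h \<otimes> s g) :: 'f)"
proof -
  have "grp_alg_mult G (sg g :: 'a \<Rightarrow> 'f) (sg h) = grp_alg_mult G (sg h) (sg g)"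
    using C sg_sym[OF g] sg_sym[OF h] unfolding sym_commutative_def by blast
  hence "grp_alg_mult G (sg g :: 'a \<Rightarrow> 'f) (sg h) x = grp_alg_mult G (sg h) (sg g) x" by simp
  thus ?thesis unfolding sg_def using g h x 
    apply (simp only: lc_mult_lc s_closed mult_1_left mult_1_right)
    by (simp add: mult_ac)
qed

lemma normal_lc:
  assumes N: "grp_alg_normal G s \<sigma> TYPE('f::field)" and g: "g \<in> carrier G" and h: "h \<in> carrier G"
  shows "grp_alg_mult G (lc (c1::'f) g c2 h) (oriented_inv G s \<sigma> (lc c1 g c2 h)) =
         grp_alg_mult G (oriented_inv G s \<sigma> (lc c1 g c2 h)) (lc c1 g c2 h)"
  using N lc_in[OF g h] unfolding grp_alg_normal_def by blast

lemma gsg_comm: "grp_alg_normal G s \<sigma> TYPE('f::field) \<Longrightarrow> g \<in> carrier G \<Longrightarrow> g \<otimes> s g = s g \<otimes> g"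
proof -
  assume N: "grp_alg_normal G s \<sigma> TYPE('f)" and g: "g \<in> carrier G"
  have "grp_alg_mult G (lc (1::'f) g 0 g) (oriented_inv G s \<sigma> (lc 1 g 0 g)) (g \<otimes> s g) =
         grp_alg_mult G (oriented_inv G s \<sigma> (lc 1 g 0 g)) (lc 1 g 0 g) (g \<otimes> s g)"
    using normal_lc[OF N g g] by simp
  hence "of_int (\<sigma> g) = (of_int (\<sigma> g) * ind (g \<otimes> s g = s g \<otimes> g) :: 'f)"
    using g by (simp add: oinv_lc lc_mult_lc)
  moreover have "(of_int (\<sigma> g) :: 'f) \<noteq> 0" using sig_vals[OF g] by auto
  ultimately show ?thesis by (cases "g \<otimes> s g = s g \<otimes> g") auto
qed

lemma N_pt:
  assumes N: "grp_alg_normal G s \<sigma> TYPE('f::field)"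
    and g: "g \<in> carrier G" and h: "h \<in> carrier G" and x: "x \<in> carrier G"
  shows "of_int (\<sigma> h) * ind (x = g \<otimes> s h) + of_int (\<sigma> g) * ind (x = h \<otimes> s g) =
         (of_int (\<sigma> g) * ind (x = s g \<otimes> h) + of_int (\<sigma> h) * ind (x = s h \<otimes> g) :: 'f)"
proof -
  have "grp_alg_mult G (lc (1::'f) g 1 h) (oriented_inv G s \<sigma> (lc 1 g 1 h)) x =
         grp_alg_mult G (oriented_inv G s \<sigma> (lc 1 g 1 h)) (lc 1 g 1 h) x"
    using normal_lc[OF N g h] by simp
  thus ?thesis using g h x gsg_comm[OF N g] gsg_comm[OF N h]
    by (simp add: oinv_lc lc_mult_lc algebra_simps)
qed

end

context invgrp begin

lemma C_factA:
  assumes C: "sym_commutative G s \<sigma> TYPE('f::field)" and two: "(2::'f) \<noteq> 0"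
    and u: "u \<in> carrier G" and su: "s u = u" and sigu: "\<sigma> u = 1" and y: "y \<in> carrier G"
  shows "u \<otimes> y = y \<otimes> u"
proof (rule ccontr)
  assume nc: "u \<otimes> y \<noteq> y \<otimes> u"
  have four: "(4::'f) \<noteq> 0" using two by (metis mult_eq_0_iff numeral_Bit0_eq_double mult_2)
  note E1 = C_pt[OF C u y m_closed[OF u y]]
  note E2 = C_pt[OF C u m_closed[OF u y] m_closed[OF u m_closed[OF u y]]]
  have suy: "s (u \<otimes> y) = s y \<otimes> u" using s_mult[OF u y] su by simp
  have siguy: "\<sigma> (u \<otimes> y) = \<sigma> y" using sig_mult[OF u y] sigu by simp
  have E1': "(2::'f) * (of_int (\<sigma> y) * ind (y = s y)) + 2 = 2 * (of_int (\<sigma> y) * ind (u \<otimes> y = s y \<otimes> u))"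
    using E1 nc u y su sigu by (simp add: m_assoc)
  show False
  proof (cases "\<sigma> y = 1")
    case True
    have "y \<noteq> s y" "u \<otimes> y = s y \<otimes> u" using E1' True numfacts[OF two] two
      by (auto simp: ind_def split: if_splits)
    thus False using E2 nc u y su sigu suy siguy True four
      apply (simp add: m_assoc)
      apply (simp add: ind_def split: if_splits)
      by (metis lcan s_closed)
  next
    case False
    hence F: "\<sigma> y = -1" using sig_vals[OF y] by auto
    have "y = s y" "u \<otimes> y \<noteq> s y \<otimes> u" using E1' F nc numfacts[OF two] two
      by (auto simp: ind_def split: if_splits)
    thus False using E2 nc u y su sigu suy siguy F numfacts[OF two]
      apply (simp add: m_assoc)
      apply (simp add: ind_def split: if_splits)
      done
  qed
qed

end

context invgrp begin

lemma N_factA: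
  assumes N: "grp_alg_normal G s \<sigma> TYPE('f::field)" and two: "(2::'f) \<noteq> 0"
    and u: "u \<in> carrier G" and su: "s u = u" and sigu: "\<sigma> u = 1" and y: "y \<in> carrier G"
  shows "u \<otimes> y = y \<otimes> u"
proof (rule ccontr)
  assume nc: "u \<otimes> y \<noteq> y \<otimes> u"
  note E1 = N_pt[OF N u y m_closed[OF u y]]
  note E2 = N_pt[OF N u m_closed[OF u y] m_closed[OF m_closed[OF u y] u]]
  have suy: "s (u \<otimes> y) = s y \<otimes> u" using s_mult[OF u y] su by simp
  have siguy: "\<sigma> (u \<otimes> y) = \<sigma> y" using sig_mult[OF u y] sigu by simp
  have E1': "(of_int (\<sigma> y) * ind (y = s y) :: 'f) = 1 + of_int (\<sigma> y) * ind (u \<otimes> y = s y \<otimes> u)"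
    using E1 nc u y su sigu by simp
  show False
  proof (cases "\<sigma> y = 1")
    case True
    have "s y = y" "u \<otimes> y \<noteq> s y \<otimes> u" using E1' True numfacts[OF two] two
      by (auto simp: ind_def split: if_splits)
    thus False using E2 nc u y su sigu suy siguy True numfacts[OF two] two
      by (simp add: m_assoc)
  next
    case False
    hence F: "\<sigma> y = -1" using sig_vals[OF y] by auto
    have "y \<noteq> s y" "u \<otimes> y = s y \<otimes> u" using E1' F numfacts[OF two] two
      by (auto simp: ind_def split: if_splits)
    thus False using E2 nc u y su sigu suy siguy F numfacts[OF two] two
      apply (simp add: m_assoc)
      apply (simp add: ind_def split: if_splits)
      done
  qed
qed

definition factA :: bool where
  "factA \<longleftrightarrow> (\<forall>u\<in>carrier G. \<sigma> u = 1 \<longrightarrow> s u = u \<longrightarrow> (\<forall>y\<in>carrier G. u \<otimes> y = y \<otimes> u))"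

lemma factAD: "factA \<Longrightarrow> u \<in> carrier G \<Longrightarrow> \<sigma> u = 1 \<Longrightarrow> s u = u \<Longrightarrow> y \<in> carrier G \<Longrightarrow> u \<otimes> y = y \<otimes> u"
  unfolding factA_def by blast

lemma tw_central:
  assumes A: factA and g: "g \<in> carrier G" and y: "y \<in> carrier G"
  shows "(g \<otimes> s g) \<otimes> y = y \<otimes> (g \<otimes> s g)"
proof -
  have "\<sigma> (g \<otimes> s g) = 1" using sker g by blast
  moreover have "s (g \<otimes> s g) = g \<otimes> s g" using s_mult[OF g s_closed[OF g]] g by simp
  ultimately show ?thesis using factAD[OF A _ _ _ y] g by simp
qed

lemma tw_comm:
  assumes A: factA and g: "g \<in> carrier G"
  shows "s g \<otimes> g = g \<otimes> s g"
proof -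
  have "(g \<otimes> s g) \<otimes> g = g \<otimes> (g \<otimes> s g)" using tw_central[OF A g g] .
  hence "g \<otimes> (s g \<otimes> g) = g \<otimes> (g \<otimes> s g)" using g by (simp add: m_assoc)
  thus ?thesis using g by simp
qed

lemma C_factA': assumes "sym_commutative G s \<sigma> TYPE('f::field)" "(2::'f) \<noteq> 0" shows factA
  unfolding factA_def
proof (intro ballI impI)
  fix u y assume "u \<in> carrier G" "\<sigma> u = 1" "s u = u" "y \<in> carrier G"
  thus "u \<otimes> y = y \<otimes> u" using C_factA[OF assms] by blast
qed
lemma N_factA': assumes "grp_alg_normal G s \<sigma> TYPE('f::field)" "(2::'f) \<noteq> 0" shows factA
  unfolding factA_def
proof (intro ballI impI)
  fix u y assume "u \<in> carrier G" "\<sigma> u = 1" "s u = u" "y \<in> carrier G"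
  thus "u \<otimes> y = y \<otimes> u" using N_factA[OF assms] by blast
qed

end

context invgrp begin

lemma tw1:
  assumes A: factA and a: "a \<in> carrier G" and b: "b \<in> carrier G"
  shows "(a \<otimes> (b \<otimes> s a) = s a \<otimes> (a \<otimes> b)) \<longleftrightarrow> (a \<otimes> b = b \<otimes> a)"
proof -
  have sa: "s a \<in> carrier G" using a by simp
  have Z: "s a \<otimes> a = a \<otimes> s a" using tw_comm[OF A a] .
  have cZ: "\<And>y. y \<in> carrier G \<Longrightarrow> (a \<otimes> s a) \<otimes> y = y \<otimes> (a \<otimes> s a)" using tw_central[OF A a] by blast
  have "(a \<otimes> (b \<otimes> s a) = s a \<otimes> (a \<otimes> b)) \<longleftrightarrow> (a \<otimes> (b \<otimes> s a)) \<otimes> a = (s a \<otimes> (a \<otimes> b)) \<otimes> a"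
    using a b sa by simp
  also have "(a \<otimes> (b \<otimes> s a)) \<otimes> a = (a \<otimes> b) \<otimes> (a \<otimes> s a)"
    using a b sa Z by (simp add: m_assoc)
  also have "(s a \<otimes> (a \<otimes> b)) \<otimes> a = (a \<otimes> s a) \<otimes> (b \<otimes> a)"
    using a b sa Z by (simp add: m_assoc[symmetric])
  also have "\<dots> = (b \<otimes> a) \<otimes> (a \<otimes> s a)" using cZ a b by simp
  finally show ?thesis using a b sa by simp
qed

lemma tw2:
  assumes A: factA and a: "a \<in> carrier G" and b: "b \<in> carrier G"
  shows "(a \<otimes> (b \<otimes> s a) = s b \<otimes> (s a \<otimes> a)) \<longleftrightarrow> (a \<otimes> b = s b \<otimes> a)"
proof -
  have sa: "s a \<in> carrier G" using a by simp
  have sb: "s b \<in> carrier G" using b by simp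
  have Z: "s a \<otimes> a = a \<otimes> s a" using tw_comm[OF A a] .
  have cZ: "\<And>y. y \<in> carrier G \<Longrightarrow> (a \<otimes> s a) \<otimes> y = y \<otimes> (a \<otimes> s a)" using tw_central[OF A a] by blast
  have "(a \<otimes> (b \<otimes> s a) = s b \<otimes> (s a \<otimes> a)) \<longleftrightarrow> (a \<otimes> (b \<otimes> s a)) \<otimes> a = (s b \<otimes> (s a \<otimes> a)) \<otimes> a"
    using a b sa sb by simp
  also have "(a \<otimes> (b \<otimes> s a)) \<otimes> a = (a \<otimes> b) \<otimes> (a \<otimes> s a)"
    using a b sa Z by (simp add: m_assoc)
  also have "(s b \<otimes> (s a \<otimes> a)) \<otimes> a = s b \<otimes> ((a \<otimes> s a) \<otimes> a)"
    using a b sa sb Z by (simp add: m_assoc)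
  also have "\<dots> = (s b \<otimes> a) \<otimes> (a \<otimes> s a)" using cZ a b sa sb by (simp add: m_assoc)
  finally show ?thesis using a b sa sb by simp
qed

lemma Cmain:
  assumes C: "sym_commutative G s \<sigma> TYPE('f::field)" and two: "(2::'f) \<noteq> 0"
    and a: "a \<in> carrier G" and b: "b \<in> carrier G" and nc: "a \<otimes> b \<noteq> b \<otimes> a"
  shows "(s a = a \<and> \<sigma> a = -1) \<or> (s a \<noteq> a \<and> \<sigma> a = 1 \<and> a \<otimes> b = b \<otimes> s a)"
proof -
  have A: factA using C_factA'[OF C two] .
  have sa: "s a \<in> carrier G" using a by simp
  have sb: "s b \<in> carrier G" using b by simp
  define ea where "ea = (of_int (\<sigma> a) :: 'f)"
  define eb where "eb = (of_int (\<sigma> b) :: 'f)"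
  have eaa: "ea * ea = 1" unfolding ea_def using sig_sq[OF a] by (metis of_int_1 of_int_mult)
  have eaa2: "\<And>X. of_int (\<sigma> a) * (of_int (\<sigma> a) * X) = (X::'f)" using eaa unfolding ea_def
    by (metis mult.assoc mult_1)
  have eab: "\<And>X. ea * (ea * X) = (X::'f)" using eaa by (metis mult.assoc mult_1)
  have o1: "ind (b \<otimes> s a = a \<otimes> b) = (ind (a \<otimes> b = b \<otimes> s a) :: 'f)" by (simp only: eq_commute)
  have o2: "ind (s a = a) = (ind (a = s a) :: 'f)" by (simp only: eq_commute)
  note E1 = C_pt[OF C a b m_closed[OF a b]]
  note E2 = C_pt[OF C a m_closed[OF a b] m_closed[OF m_closed[OF a b] sa]]
  have E1s: "1 + eb * ind (b = s b) + ea * ind (a = s a) + ea * eb * ind (a \<otimes> b = s a \<otimes> s b) =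
     ea * ind (a \<otimes> b = b \<otimes> s a) + eb * ind (a \<otimes> b = s b \<otimes> a) + ea * eb * ind (a \<otimes> b = s b \<otimes> s a)"
    using E1 nc a b unfolding ea_def eb_def by (simp add: algebra_simps)
  have E2s: "ind (a \<otimes> b = b \<otimes> s a) + ea * eb * ind (b = s b) + eb * ind (a \<otimes> b = s a \<otimes> s b) =
     ind (a = s a) + ea + ea * eb * ind (a \<otimes> b = s b \<otimes> a) + eb * ind (a \<otimes> b = s b \<otimes> s a)"
    using E2 nc a b tw1[OF A a b] tw2[OF A a b] s_mult[OF a b] sig_mult[OF a b] eaa2 o1 o2
    unfolding ea_def eb_def by (simp add: m_assoc algebra_simps)
  have "2 * ind (a \<otimes> b = b \<otimes> s a) - 2 * ind (a = s a) - 2 * ea = 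
        (ind (a \<otimes> b = b \<otimes> s a) + ea * eb * ind (b = s b) + eb * ind (a \<otimes> b = s a \<otimes> s b)
         - (ind (a = s a) + ea + ea * eb * ind (a \<otimes> b = s b \<otimes> a) + eb * ind (a \<otimes> b = s b \<otimes> s a)))
     - ea * ((1 + eb * ind (b = s b) + ea * ind (a = s a) + ea * eb * ind (a \<otimes> b = s a \<otimes> s b)) -
     (ea * ind (a \<otimes> b = b \<otimes> s a) + eb * ind (a \<otimes> b = s b \<otimes> a) + ea * eb * ind (a \<otimes> b = s b \<otimes> s a)))"
    by (simp add: algebra_simps eaa eab)
  also have "\<dots> = 0" using E1s E2s by simp
  finally have key: "2 * (ind (a \<otimes> b = b \<otimes> s a) - ind (a = s a) - ea) = 0" by (simp add: algebra_simps)
  hence key2: "ind (a \<otimes> b = b \<otimes> s a) - ind (a = s a) - ea = 0" using two mult_eq_0_iff by blast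
  show ?thesis
  proof (cases "s a = a")
    case True
    hence "a \<otimes> b \<noteq> b \<otimes> s a" using nc by simp
    hence "ea = -1" using key2 True by simp
    thus ?thesis using True sig_vals[OF a] numfacts[OF two] unfolding ea_def by auto
  next
    case False
    hence "a \<noteq> s a" by metis
    thus ?thesis using key2 False sig_vals[OF a] numfacts[OF two] unfolding ea_def
      by (cases "a \<otimes> b = b \<otimes> s a") auto
  qed
qed

end

context invgrp begin

lemma tw3:
  assumes A: factA and g: "g \<in> carrier G" and y: "y \<in> carrier G" and c: "g \<otimes> y = y \<otimes> g"
  shows "s g \<otimes> y = y \<otimes> s g"
proof -
  have sg: "s g \<in> carrier G" using g by simp
  have Z: "s g \<otimes> g = g \<otimes> s g" using tw_comm[OF A g] .
  have cZ: "(g \<otimes> s g) \<otimes> y = y \<otimes> (g \<otimes> s g)" using tw_central[OF A g y] .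
  have "(s g \<otimes> y) \<otimes> g = s g \<otimes> (g \<otimes> y)" using g y sg c by (simp add: m_assoc)
  also have "\<dots> = (g \<otimes> s g) \<otimes> y" using g y sg Z by (simp add: m_assoc[symmetric])
  also have "\<dots> = y \<otimes> (g \<otimes> s g)" using cZ .
  also have "\<dots> = (y \<otimes> s g) \<otimes> g" using g y sg Z by (simp add: m_assoc)
  finally show ?thesis using g y sg by simp
qed

lemma tw4:
  assumes A: factA and g: "g \<in> carrier G" and y: "y \<in> carrier G" and c: "g \<otimes> y = y \<otimes> s g"
  shows "s g \<otimes> y = y \<otimes> g"
proof -
  have sg: "s g \<in> carrier G" using g by simp
  have Z: "s g \<otimes> g = g \<otimes> s g" using tw_comm[OF A g] .
  have cZ: "(g \<otimes> s g) \<otimes> y = y \<otimes> (g \<otimes> s g)" using tw_central[OF A g y] .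
  have "(s g \<otimes> y) \<otimes> s g = s g \<otimes> (g \<otimes> y)" using g y sg c by (simp add: m_assoc)
  also have "\<dots> = (g \<otimes> s g) \<otimes> y" using g y sg Z by (simp add: m_assoc[symmetric])
  also have "\<dots> = y \<otimes> (g \<otimes> s g)" using cZ .
  also have "\<dots> = (y \<otimes> g) \<otimes> s g" using g y sg Z by (simp add: m_assoc)
  finally show ?thesis using g y sg by simp
qed

lemma tw4':
  assumes A: factA and g: "g \<in> carrier G" and y: "y \<in> carrier G" and c: "s g \<otimes> y = y \<otimes> g"
  shows "g \<otimes> y = y \<otimes> s g"
  using tw4[OF A s_closed[OF g] y] c g by simp

lemma tw3':
  assumes A: factA and g: "g \<in> carrier G" and y: "y \<in> carrier G" and c: "s g \<otimes> y = y \<otimes> s g"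
  shows "g \<otimes> y = y \<otimes> g"
  using tw3[OF A s_closed[OF g] y] c g by simp

lemma NC:
  assumes N: "grp_alg_normal G s \<sigma> TYPE('f::field)" and two: "(2::'f) \<noteq> 0"
    and g: "g \<in> carrier G" and h: "h \<in> carrier G" and nc: "g \<otimes> h \<noteq> h \<otimes> g"
  shows "(\<sigma> g = \<sigma> h \<longrightarrow> g \<otimes> s h = s g \<otimes> h) \<and> (\<sigma> g \<noteq> \<sigma> h \<longrightarrow> h \<otimes> s g = g \<otimes> s h)"
proof -
  have A: factA using N_factA'[OF N two] .
  have n1: "g \<otimes> s h \<noteq> s h \<otimes> g" using tw3'[OF A h g] nc by metis
  have n2: "h \<otimes> s g \<noteq> s g \<otimes> h" using tw3'[OF A g h] nc by metis
  note E1 = N_pt[OF N g h m_closed[OF g s_closed[OF h]]]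
  note E2 = N_pt[OF N g h m_closed[OF h s_closed[OF g]]]
  show ?thesis
  proof (intro conjI impI)
    assume e: "\<sigma> g = \<sigma> h"
    show "g \<otimes> s h = s g \<otimes> h"
    proof (cases "\<sigma> g = 1")
      case True
      thus ?thesis using E1 e n1 numfacts[OF two] by (auto simp: ind_def split: if_splits)
    next
      case False
      hence "\<sigma> g = -1" using sig_vals[OF g] by auto
      thus ?thesis using E1 e n1 numfacts[OF two] by (auto simp: ind_def split: if_splits)
    qed
  next
    assume e: "\<sigma> g \<noteq> \<sigma> h"
    show "h \<otimes> s g = g \<otimes> s h"
    proof (cases "\<sigma> g = 1")
      case True
      hence "\<sigma> h = -1" using e sig_vals[OF h] by auto
      thus ?thesis using E2 True n2 numfacts[OF two] by (auto simp: ind_def split: if_splits)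
    next
      case False
      hence "\<sigma> g = -1" "\<sigma> h = 1" using sig_vals[OF g] sig_vals[OF h] e by auto
      thus ?thesis using E2 n2 numfacts[OF two] by (auto simp: ind_def split: if_splits)
    qed
  qed
qed

end

context invgrp begin

lemma T1N:
  assumes N: "grp_alg_normal G s \<sigma> TYPE('f::field)" and two: "(2::'f) \<noteq> 0"
    and g: "g \<in> carrier G" and sig: "\<sigma> g = -1" and ns: "s g \<noteq> g" and y: "y \<in> carrier G"
  shows "g \<otimes> y = y \<otimes> g"
proof (rule ccontr)
  assume nc: "g \<otimes> y \<noteq> y \<otimes> g"
  have A: factA using N_factA'[OF N two] .
  have sg: "s g \<in> carrier G" and sy: "s y \<in> carrier G" using g y by auto
  have Z: "s g \<otimes> g = g \<otimes> s g" using tw_comm[OF A g] .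
  have cZ: "\<And>x. x \<in> carrier G \<Longrightarrow> (g \<otimes> s g) \<otimes> x = x \<otimes> (g \<otimes> s g)" using tw_central[OF A g] by blast
  show False
  proof (cases "\<sigma> y = 1")
    case True
    have n1: "y \<otimes> s g = g \<otimes> s y" using NC[OF N two g y nc] sig True by simp
    have nc2: "g \<otimes> (g \<otimes> y) \<noteq> (g \<otimes> y) \<otimes> g" using nc g y by (simp add: m_assoc)
    have "\<sigma> (g \<otimes> y) = -1" using sig_mult[OF g y] sig True by simp
    hence n2: "g \<otimes> s (g \<otimes> y) = s g \<otimes> (g \<otimes> y)" using NC[OF N two g m_closed[OF g y] nc2] sig by simp
    have "(y \<otimes> s g) \<otimes> s g = (g \<otimes> s y) \<otimes> s g" using n1 by simp
    also have "\<dots> = g \<otimes> s (g \<otimes> y)" using s_mult[OF g y] g y by (simp add: m_assoc)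
    also have "\<dots> = (s g \<otimes> g) \<otimes> y" using n2 g y by (simp add: m_assoc)
    also have "\<dots> = y \<otimes> (s g \<otimes> g)" using cZ[OF y] Z by simp
    finally have "y \<otimes> (s g \<otimes> s g) = y \<otimes> (s g \<otimes> g)" using g y by (simp add: m_assoc)
    hence "s g = g" using g y by simp
    thus False using ns by simp
  next
    case False
    hence sy1: "\<sigma> y = -1" using sig_vals[OF y] by auto
    have n1: "g \<otimes> s y = s g \<otimes> y" using NC[OF N two g y nc] sig sy1 by simp
    have nc2: "g \<otimes> (y \<otimes> g) \<noteq> (y \<otimes> g) \<otimes> g" using nc g y by (simp add: m_assoc)
    have "\<sigma> (y \<otimes> g) = 1" using sig_mult[OF y g] sig sy1 by simp
    hence n2: "(y \<otimes> g) \<otimes> s g = g \<otimes> s (y \<otimes> g)" using NC[OF N two g m_closed[OF y g] nc2] sig by simp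
    have "y \<otimes> (g \<otimes> s g) = (g \<otimes> s g) \<otimes> s y" using n2 s_mult[OF y g] g y by (simp add: m_assoc)
    also have "\<dots> = s y \<otimes> (g \<otimes> s g)" using cZ[OF sy] .
    finally have "y = s y" using g y by simp
    hence "g \<otimes> y = s g \<otimes> y" using n1 by simp
    hence "g = s g" using g y by simp
    thus False using ns by simp
  qed
qed

lemma T2N:
  assumes N: "grp_alg_normal G s \<sigma> TYPE('f::field)" and two: "(2::'f) \<noteq> 0"
    and g: "g \<in> carrier G" and sig: "\<sigma> g = 1" and y: "y \<in> carrier G" and nc: "g \<otimes> y \<noteq> y \<otimes> g"
  shows "g \<otimes> y = y \<otimes> s g"
proof -
  have A: factA using N_factA'[OF N two] .
  have sg: "s g \<in> carrier G" and sy: "s y \<in> carrier G" using g y by auto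
  have Z: "s g \<otimes> g = g \<otimes> s g" using tw_comm[OF A g] .
  show ?thesis
  proof (cases "\<sigma> y = 1")
    case True
    have n1: "g \<otimes> s y = s g \<otimes> y" using NC[OF N two g y nc] sig True by simp
    have nc2: "g \<otimes> (y \<otimes> g) \<noteq> (y \<otimes> g) \<otimes> g" using nc g y by (simp add: m_assoc)
    have "\<sigma> (y \<otimes> g) = 1" using sig_mult[OF y g] sig True by simp
    hence n2: "g \<otimes> s (y \<otimes> g) = s g \<otimes> (y \<otimes> g)" using NC[OF N two g m_closed[OF y g] nc2] sig by simp
    have "s g \<otimes> (s g \<otimes> y) = s g \<otimes> (g \<otimes> s y)" using n1 by simp
    also have "\<dots> = (s g \<otimes> g) \<otimes> s y" using g y by (simp add: m_assoc)
    also have "\<dots> = g \<otimes> (s g \<otimes> s y)" using Z g y by (simp add: m_assoc)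
    also have "\<dots> = s g \<otimes> (y \<otimes> g)" using n2 s_mult[OF y g] by simp
    finally have "s g \<otimes> y = y \<otimes> g" using g y by simp
    thus ?thesis using tw4'[OF A g y] by simp
  next
    case False
    hence sy1: "\<sigma> y = -1" using sig_vals[OF y] by auto
    have n1: "y \<otimes> s g = g \<otimes> s y" using NC[OF N two g y nc] sig sy1 by simp
    have "s y = y"
    proof (rule ccontr)
      assume "s y \<noteq> y"
      hence "y \<otimes> g = g \<otimes> y" using T1N[OF N two y sy1 _ g] by simp
      thus False using nc by simp
    qed
    thus ?thesis using n1 by simp
  qed
qed

definition Tprop :: bool where
  "Tprop \<longleftrightarrow> (\<forall>g\<in>carrier G. \<forall>y\<in>carrier G. (g \<otimes> y = y \<otimes> g \<and> s g \<otimes> y = y \<otimes> s g) \<or>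
     (\<sigma> g = 1 \<and> g \<otimes> y = y \<otimes> s g \<and> s g \<otimes> y = y \<otimes> g) \<or> (\<sigma> g = -1 \<and> s g = g))"

lemma C_T:
  assumes C: "sym_commutative G s \<sigma> TYPE('f::field)" and two: "(2::'f) \<noteq> 0"
  shows Tprop
  unfolding Tprop_def
proof (intro ballI)
  fix g y assume g: "g \<in> carrier G" and y: "y \<in> carrier G"
  have A: factA using C_factA'[OF C two] .
  show "(g \<otimes> y = y \<otimes> g \<and> s g \<otimes> y = y \<otimes> s g) \<or>
     (\<sigma> g = 1 \<and> g \<otimes> y = y \<otimes> s g \<and> s g \<otimes> y = y \<otimes> g) \<or> (\<sigma> g = -1 \<and> s g = g)"
  proof (cases "g \<otimes> y = y \<otimes> g")
    case True
    thus ?thesis using tw3[OF A g y] by simp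
  next
    case False
    thus ?thesis using Cmain[OF C two g y False] tw4[OF A g y] by auto
  qed
qed

lemma N_T:
  assumes N: "grp_alg_normal G s \<sigma> TYPE('f::field)" and two: "(2::'f) \<noteq> 0"
  shows Tprop
  unfolding Tprop_def
proof (intro ballI)
  fix g y assume g: "g \<in> carrier G" and y: "y \<in> carrier G"
  have A: factA using N_factA'[OF N two] .
  show "(g \<otimes> y = y \<otimes> g \<and> s g \<otimes> y = y \<otimes> s g) \<or>
     (\<sigma> g = 1 \<and> g \<otimes> y = y \<otimes> s g \<and> s g \<otimes> y = y \<otimes> g) \<or> (\<sigma> g = -1 \<and> s g = g)"
  proof (cases "g \<otimes> y = y \<otimes> g")
    case True
    thus ?thesis using tw3[OF A g y] by simp
  next
    case False
    show ?thesis
    proof (cases "\<sigma> g = 1")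
      case True
      thus ?thesis using T2N[OF N two g True y False] tw4[OF A g y] by auto
    next
      case F: False
      hence "\<sigma> g = -1" using sig_vals[OF g] by auto
      thus ?thesis using T1N[OF N two g _ _ y] False by auto
    qed
  qed
qed

end

context group begin

lemma grp_alg_fin: "a \<in> grp_alg G \<Longrightarrow> finite {g \<in> carrier G. a g \<noteq> 0}"
  unfolding grp_alg_def by (auto intro: finite_subset)

lemma grp_alg_out: "a \<in> grp_alg G \<Longrightarrow> g \<notin> carrier G \<Longrightarrow> a g = 0"
  unfolding grp_alg_def by auto

lemma mult_comm_classfun:
  assumes a: "a \<in> grp_alg G" and b: "b \<in> grp_alg G"
    and cf: "\<And>w y. w \<in> carrier G \<Longrightarrow> y \<in> carrier G \<Longrightarrow> a (y \<otimes> w) = a (w \<otimes> y)"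
  shows "grp_alg_mult G a b = grp_alg_mult G b a"
proof (rule ext)
  fix x
  show "grp_alg_mult G a b x = grp_alg_mult G b a x"
  proof (cases "x \<in> carrier G")
    case False thus ?thesis unfolding grp_alg_mult_def by simp
  next
    case x: True
    define Sa where "Sa = {g \<in> carrier G. a g \<noteq> 0}"
    define Sb where "Sb = {g \<in> carrier G. b g \<noteq> 0}"
    define phi where "phi = (\<lambda>h. x \<otimes> inv h)"
    define F where "F = Sa \<union> phi ` Sb"
    have fSa: "finite Sa" using grp_alg_fin[OF a] unfolding Sa_def .
    have fSb: "finite Sb" using grp_alg_fin[OF b] unfolding Sb_def .
    have Sbc: "Sb \<subseteq> carrier G" unfolding Sb_def by auto
    have phic: "phi ` Sb \<subseteq> carrier G" using Sbc x unfolding phi_def by auto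
    have Fc: "F \<subseteq> carrier G" unfolding F_def Sa_def using phic by auto
    have fF: "finite F" unfolding F_def using fSa fSb by simp
    have L: "grp_alg_mult G a b x = (\<Sum>g\<in>F. a g * b (inv g \<otimes> x))"
      using mult_sum[OF a fF _ Fc] x unfolding F_def Sa_def by auto
    have R0: "grp_alg_mult G b a x = (\<Sum>h\<in>Sb. b h * a (inv h \<otimes> x))"
      unfolding grp_alg_mult_def Sb_def using x by simp
    have inj: "inj_on phi Sb"
    proof (rule inj_onI)
      fix h1 h2 assume "h1 \<in> Sb" "h2 \<in> Sb" "phi h1 = phi h2"
      thus "h1 = h2" using Sbc x unfolding phi_def by (metis inv_inv lcan inv_closed subsetD)
    qed
    have "(\<Sum>h\<in>Sb. b h * a (inv h \<otimes> x)) = (\<Sum>h\<in>Sb. a (phi h) * b (inv (phi h) \<otimes> x))"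
    proof (rule sum.cong)
      fix h assume h: "h \<in> Sb"
      hence hc: "h \<in> carrier G" using Sbc by auto
      have "inv (phi h) \<otimes> x = h" unfolding phi_def using hc x
        by (simp add: inv_mult_group m_assoc)
      moreover have "a (inv h \<otimes> x) = a (x \<otimes> inv h)" using cf[OF x inv_closed[OF hc]] .
      ultimately show "b h * a (inv h \<otimes> x) = a (phi h) * b (inv (phi h) \<otimes> x)"
        unfolding phi_def by simp
    qed simp
    also have "\<dots> = (\<Sum>g\<in>phi ` Sb. a g * b (inv g \<otimes> x))"
      using sum.reindex[OF inj, of "\<lambda>g. a g * b (inv g \<otimes> x)"] by simp
    also have "\<dots> = (\<Sum>g\<in>F. a g * b (inv g \<otimes> x))"
    proof (rule sum.mono_neutral_left[OF fF])
      show "phi ` Sb \<subseteq> F" unfolding F_def by auto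
      show "\<forall>g\<in>F - phi ` Sb. a g * b (inv g \<otimes> x) = 0"
      proof
        fix g assume g: "g \<in> F - phi ` Sb"
        hence gc: "g \<in> carrier G" using Fc by auto
        have "b (inv g \<otimes> x) = 0"
        proof (rule ccontr)
          assume "b (inv g \<otimes> x) \<noteq> 0"
          hence "inv g \<otimes> x \<in> Sb" using gc x unfolding Sb_def by auto
          moreover have "phi (inv g \<otimes> x) = g" unfolding phi_def using gc x
            by (simp add: inv_mult_group m_assoc[symmetric])
          ultimately have "g \<in> phi ` Sb" by (metis imageI)
          thus False using g by auto
        qed
        thus "a g * b (inv g \<otimes> x) = 0" by simp
      qed
    qed
    finally show ?thesis using L R0 by simp
  qed
qed

lemma mult_diff_right:
  "grp_alg_mult G a (\<lambda>x. b1 x - b2 x) = (\<lambda>x. grp_alg_mult G a b1 x - grp_alg_mult G a b2 x)"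
  unfolding grp_alg_mult_def by (rule ext) (simp add: algebra_simps sum_subtractf)

lemma mult_diff_left:
  assumes a1: "a1 \<in> grp_alg G" and a2: "a2 \<in> grp_alg G"
  shows "grp_alg_mult G (\<lambda>x. a1 x - a2 x) b = (\<lambda>x. grp_alg_mult G a1 b x - grp_alg_mult G a2 b x)"
proof (rule ext)
  fix x
  define F where "F = {g \<in> carrier G. a1 g \<noteq> 0} \<union> {g \<in> carrier G. a2 g \<noteq> 0}"
  have fF: "finite F" unfolding F_def using grp_alg_fin[OF a1] grp_alg_fin[OF a2] by simp
  have Fc: "F \<subseteq> carrier G" unfolding F_def by auto
  have d: "(\<lambda>x. a1 x - a2 x) \<in> grp_alg G"
  proof -
    have "{g. a1 g - a2 g \<noteq> 0} \<subseteq> {g. a1 g \<noteq> 0} \<union> {g. a2 g \<noteq> 0}" by auto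
    moreover have "finite ({g. a1 g \<noteq> 0} \<union> {g. a2 g \<noteq> 0})" using a1 a2 unfolding grp_alg_def by auto
    ultimately show ?thesis using a1 a2 unfolding grp_alg_def by (auto intro: finite_subset)
  qed
  have 1: "grp_alg_mult G (\<lambda>x. a1 x - a2 x) b x = (if x \<in> carrier G then (\<Sum>g\<in>F. (a1 g - a2 g) * b (inv g \<otimes> x)) else 0)"
    by (rule mult_sum[OF d fF _ Fc]) (auto simp: F_def)
  have 2: "grp_alg_mult G a1 b x = (if x \<in> carrier G then (\<Sum>g\<in>F. a1 g * b (inv g \<otimes> x)) else 0)"
    by (rule mult_sum[OF a1 fF _ Fc]) (auto simp: F_def)
  have 3: "grp_alg_mult G a2 b x = (if x \<in> carrier G then (\<Sum>g\<in>F. a2 g * b (inv g \<otimes> x)) else 0)"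
    by (rule mult_sum[OF a2 fF _ Fc]) (auto simp: F_def)
  show "grp_alg_mult G (\<lambda>x. a1 x - a2 x) b x = grp_alg_mult G a1 b x - grp_alg_mult G a2 b x"
    unfolding 1 2 3 by (simp add: algebra_simps sum_subtractf)
qed

end

context invgrp begin

lemma sig_one: "\<sigma> \<one> = 1"
proof -
  have "\<sigma> \<one> = \<sigma> \<one> * \<sigma> \<one>" using sig_mult[of \<one> \<one>] by simp
  thus ?thesis using sig_vals[of \<one>] by auto
qed

lemma T_classfun:
  assumes T: Tprop and two: "(2::'f::field) \<noteq> 0"
    and ps: "\<And>x. x \<in> carrier G \<Longrightarrow> a x = (of_int (\<sigma> x) * a (s x) :: 'f)"
    and w: "w \<in> carrier G" and y: "y \<in> carrier G"
  shows "a (y \<otimes> w) = a (w \<otimes> y)"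
proof -
  define p where "p = y \<otimes> w"
  define q where "q = w \<otimes> y"
  have p: "p \<in> carrier G" and q: "q \<in> carrier G" unfolding p_def q_def using w y by auto
  have pq: "p \<otimes> y = y \<otimes> q" unfolding p_def q_def using w y by (simp add: m_assoc)
  have sgpq: "\<sigma> p = \<sigma> q" unfolding p_def q_def using sig_mult w y by (simp add: mult.commute)
  have Tp: "(p \<otimes> y = y \<otimes> p \<and> s p \<otimes> y = y \<otimes> s p) \<or>
     (\<sigma> p = 1 \<and> p \<otimes> y = y \<otimes> s p \<and> s p \<otimes> y = y \<otimes> p) \<or> (\<sigma> p = -1 \<and> s p = p)"
    using T p y unfolding Tprop_def by blast
  have Tq: "(q \<otimes> y = y \<otimes> q \<and> s q \<otimes> y = y \<otimes> s q) \<or>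
     (\<sigma> q = 1 \<and> q \<otimes> y = y \<otimes> s q \<and> s q \<otimes> y = y \<otimes> q) \<or> (\<sigma> q = -1 \<and> s q = q)"
    using T q y unfolding Tprop_def by blast
  have zero: "\<And>z. z \<in> carrier G \<Longrightarrow> \<sigma> z = -1 \<Longrightarrow> s z = z \<Longrightarrow> a z = 0"
  proof -
    fix z assume z: "z \<in> carrier G" "\<sigma> z = -1" "s z = z"
    have "a z = - a z" using ps[OF z(1)] z by simp
    hence "2 * a z = 0" by simp
    thus "a z = 0" using two by simp
  qed
  show ?thesis unfolding p_def[symmetric] q_def[symmetric]
  proof -
    from Tp show "a p = a q"
    proof (elim disjE conjE)
      assume "p \<otimes> y = y \<otimes> p"
      hence "y \<otimes> q = y \<otimes> p" using pq by simp
      thus ?thesis using p q y by simp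
    next
      assume s1: "\<sigma> p = 1" and e: "p \<otimes> y = y \<otimes> s p"
      hence "y \<otimes> q = y \<otimes> s p" using pq by simp
      hence "q = s p" using p q y by simp
      thus ?thesis using ps[OF p] s1 by simp
    next
      assume s1: "\<sigma> p = -1" and e: "s p = p"
      have ap: "a p = 0" using zero[OF p s1 e] .
      from Tq show ?thesis
      proof (elim disjE conjE)
        assume "q \<otimes> y = y \<otimes> q"
        hence "p \<otimes> y = q \<otimes> y" using pq by simp
        thus ?thesis using p q y by simp
      next
        assume "\<sigma> q = 1" thus ?thesis using s1 sgpq by simp
      next
        assume "\<sigma> q = -1" "s q = q" thus ?thesis using zero[OF q] ap by simp
      qed
    qed
  qed
qed

lemma oinv_in: "a \<in> grp_alg G \<Longrightarrow> oriented_inv G s \<sigma> a \<in> grp_alg G"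
proof -
  assume a: "a \<in> grp_alg G"
  have "{x. oriented_inv G s \<sigma> a x \<noteq> 0} \<subseteq> s ` {y. a y \<noteq> 0}"
  proof
    fix x assume "x \<in> {x. oriented_inv G s \<sigma> a x \<noteq> 0}"
    hence x: "x \<in> carrier G" "a (s x) \<noteq> 0" unfolding oriented_inv_def by (auto split: if_splits)
    hence "x = s (s x)" by simp
    thus "x \<in> s ` {y. a y \<noteq> 0}" using x by blast
  qed
  moreover have "finite (s ` {y. a y \<noteq> 0})" using a unfolding grp_alg_def by auto
  ultimately have fin: "finite {x. oriented_inv G s \<sigma> a x \<noteq> 0}" by (rule finite_subset)
  show ?thesis unfolding grp_alg_def mem_Collect_eq
  proof (intro conjI allI impI)
    show "finite {x. oriented_inv G s \<sigma> a x \<noteq> 0}" using fin .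
  next
    fix g assume "g \<notin> carrier G" thus "oriented_inv G s \<sigma> a g = 0" unfolding oriented_inv_def by simp
  qed
qed

lemma oinv_pt: "x \<in> carrier G \<Longrightarrow> oriented_inv G s \<sigma> a x = of_int (\<sigma> x) * a (s x)"
  unfolding oriented_inv_def by simp

lemma sym_ps: "a \<in> sym_elems G s \<sigma> \<Longrightarrow> x \<in> carrier G \<Longrightarrow> a x = of_int (\<sigma> x) * a (s x)"
  unfolding sym_elems_def using oinv_pt by (metis (mono_tags, lifting) mem_Collect_eq)

lemma T_symcomm:
  assumes T: Tprop and two: "(2::'f::field) \<noteq> 0"
  shows "sym_commutative G s \<sigma> TYPE('f)"
  unfolding sym_commutative_def
proof (intro ballI)
  fix a b :: "'a \<Rightarrow> 'f" assume a: "a \<in> sym_elems G s \<sigma>" and b: "b \<in> sym_elems G s \<sigma>"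
  have ag: "a \<in> grp_alg G" and bg: "b \<in> grp_alg G" using a b unfolding sym_elems_def by auto
  show "grp_alg_mult G a b = grp_alg_mult G b a"
    by (rule mult_comm_classfun[OF ag bg]) (rule T_classfun[OF T two sym_ps[OF a]], auto)
qed

lemma T_normal:
  assumes T: Tprop and two: "(2::'f::field) \<noteq> 0"
  shows "grp_alg_normal G s \<sigma> TYPE('f)"
  unfolding grp_alg_normal_def
proof (intro ballI)
  fix al :: "'a \<Rightarrow> 'f" assume al: "al \<in> grp_alg G"
  define be where "be = oriented_inv G s \<sigma> al"
  define a where "a = (\<lambda>x. al x + be x)"
  have beg: "be \<in> grp_alg G" using oinv_in[OF al] unfolding be_def .
  have ag: "a \<in> grp_alg G"
  proof -
    have "{g. al g + be g \<noteq> 0} \<subseteq> {g. al g \<noteq> 0} \<union> {g. be g \<noteq> 0}" by auto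
    moreover have "finite ({g. al g \<noteq> 0} \<union> {g. be g \<noteq> 0})" using al beg unfolding grp_alg_def by auto
    ultimately show ?thesis using al beg unfolding grp_alg_def a_def by (auto intro: finite_subset)
  qed
  have ps: "\<And>x. x \<in> carrier G \<Longrightarrow> a x = of_int (\<sigma> x) * a (s x)"
  proof -
    fix x assume x: "x \<in> carrier G"
    have ss: "(of_int (\<sigma> x) :: 'f) * of_int (\<sigma> x) = 1" using sig_sq[OF x] by (metis of_int_1 of_int_mult)
    have o1: "oriented_inv G s \<sigma> al x = of_int (\<sigma> x) * al (s x)" using oinv_pt[OF x] .
    have o2: "oriented_inv G s \<sigma> al (s x) = of_int (\<sigma> x) * al x" using oinv_pt[OF s_closed[OF x]] x by simp
    show "a x = of_int (\<sigma> x) * a (s x)"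
      unfolding a_def be_def o1 o2 by (simp add: algebra_simps ss)
  qed
  have bed: "be = (\<lambda>x. a x - al x)" unfolding a_def by simp
  have comm: "grp_alg_mult G al a = grp_alg_mult G a al"
    by (rule sym[OF mult_comm_classfun[OF ag al]]) (rule T_classfun[OF T two ps], auto)
  have "grp_alg_mult G al be = (\<lambda>x. grp_alg_mult G al a x - grp_alg_mult G al al x)"
    unfolding bed by (rule mult_diff_right)
  also have "\<dots> = (\<lambda>x. grp_alg_mult G a al x - grp_alg_mult G al al x)" using comm by simp
  also have "\<dots> = grp_alg_mult G be al" unfolding bed by (rule sym[OF mult_diff_left[OF ag al]])
  finally show "grp_alg_mult G al (oriented_inv G s \<sigma> al) = grp_alg_mult G (oriented_inv G s \<sigma> al) al"
    unfolding be_def .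
qed

end

theorem theorem6:
  fixes G :: "('g, 'b) monoid_scheme" and s :: "'g \<Rightarrow> 'g" and \<sigma> :: "'g \<Rightarrow> int"
  assumes "CHAR('f::field) \<noteq> 2"
    and "group G"
    and "\<not> comm_group G"
    and "group_involution G s"
    and "orientation G \<sigma>"
    and "\<exists>g\<in>carrier G. \<sigma> g \<noteq> 1"
    and "\<forall>g\<in>carrier G. \<sigma> (g \<otimes>\<^bsub>G\<^esub> s g) = 1"
  shows "grp_alg_normal G s \<sigma> TYPE('f) \<longleftrightarrow> sym_commutative G s \<sigma> TYPE('f)"
proof -
  interpret invgrp G s \<sigma>
    using assms(2,4,5,7) by (simp add: invgrp_def invgrp_axioms_def)
  have two: "(2::'f) \<noteq> 0" using two_ne[OF assms(1)] .
  show ?thesis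
  proof
    assume "grp_alg_normal G s \<sigma> TYPE('f)"
    thus "sym_commutative G s \<sigma> TYPE('f)" using N_T two T_symcomm by blast
  next
    assume "sym_commutative G s \<sigma> TYPE('f)"
    thus "grp_alg_normal G s \<sigma> TYPE('f)" using C_T two T_normal by blast
  qed
qed

end
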